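(* Assume that $\xi_p\in F$; that if $p=2$ and $n=1$ then $-1\in N_{K/F}(K^\times)$; and that we are not in the case ($p=2$ and $\omega=1<\nu$). Suppose $\nu=\infty$. Then for every $m\ge1$, $((-\infty,\dots,-\infty),1)$ is a minimal norm pair of length $m$ for $K/F$.
   Context: Let $p$ be a prime, $n\ge1$, and $K/F$ a cyclic Galois extension of degree $p^n$ with $\mathrm{char}(K)\neq p$; $G=\mathrm{Gal}(K/F)=\langle\sigma\rangle$. For $0\le i\le n$ let $K_i$ be the intermediate field with $[K_i:F]=p^i$. For $k\ge1$, $\xi_{p^k}$ denotes a primitive $p^k$-th root of unity and $\mu_{p^k}$ the group of $p^k$-th roots of unity. Put $\omega=\infty$ if $\mu_{p^k}\subseteq F$ for all $k$, otherwise $\omega$ is the integer with $\mu_{p^\omega}\subseteq F$, $\mu_{p^{\omega+1}}\not\subseteq F$; define $\nu$ the same way with $K$ in place of $F$. $U_i=1+p^i\mathbb Z$, $v_p$ the $p$-adic valuation. Conventions: $-\infty$ is smaller than every integer, $p^{-\infty}=0$. Norm pair: for $m\ge1$, a pair $(\mathbf a,d)$ with $\mathbf a=(a_0,\dots,a_{m-1})\in\{-\infty,0,1,\dots,n\}^m$, $a_0<n$, and $d\in U_1$ is a norm pair of length $m$ if there exist $\alpha,\delta_m\in K^\times$ and $\delta_i\in K_{a_i}^\times$ for $0\le i<m$ (with $\delta_i=1$ when $a_i=-\infty$) such that $\sigma(\alpha)=\alpha^d\delta_0\delta_1^p\cdots\delta_m^{p^m}$ and $\xi_p=N_{K/F}(\alpha)^{(d-1)/p}\,N_{K_{n-1}/F}(\delta_0)\prod_{i=1}^m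 N_{K/F}(\delta_i)^{p^{i-1}}$ for a fixed primitive $p$-th root of unity $\xi_p$. Order: $(\mathbf a,d)\le(\mathbf a',d')$ if $\mathbf a<\mathbf a'$ lexicographically, or $\mathbf a=\mathbf a'$ and $\min\{v_p(d'-1),m\}\le\min\{v_p(d-1),m\}$. A norm pair of length $m$ is minimal if it is $\le$ every norm pair of length $m$. *)

theory Defs
  imports "HOL-Number_Theory.Number_Theory" "HOL-Library.Extended_Nat"
begin

(* The cyclic Galois extension K/F of degree p^n with Gal(K/F) = <sigma> is modelled
   (via Artin's theorem) by a field K (the type 'a), a field automorphism sigma of K of
   order exactly p^n, and F = fixed field of sigma.  K_i is the fixed field of sigma^(p^i). *)

definition fixfield :: "('a \<Rightarrow> 'a) \<Rightarrow> nat \<Rightarrow> 'a set" where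
  "fixfield \<sigma> k = {x. (\<sigma> ^^ k) x = x}"

(* relative norm N_{K_i/F}(x) = prod_{j < [K_i:F]} sigma^j(x), for x in K_i *)
definition normK :: "('a::comm_monoid_mult \<Rightarrow> 'a) \<Rightarrow> nat \<Rightarrow> 'a \<Rightarrow> 'a" where
  "normK \<sigma> N x = (\<Prod>j<N. (\<sigma> ^^ j) x)"

definition is_field_automorphism :: "('a::field \<Rightarrow> 'a) \<Rightarrow> bool" where
  "is_field_automorphism \<sigma> \<longleftrightarrow> bij \<sigma> \<and> (\<forall>x y. \<sigma> (x + y) = \<sigma> x + \<sigma> y)
      \<and> (\<forall>x y. \<sigma> (x * y) = \<sigma> x * \<sigma> y) \<and> \<sigma> 1 = 1"

definition contains_mu :: "nat \<Rightarrow> 'a::field set \<Rightarrow> nat \<Rightarrow> bool" where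
  "contains_mu p S k \<longleftrightarrow> (\<exists>z\<in>S. z ^ (p ^ k) = 1 \<and> (\<forall>j. 0 < j \<and> j < p ^ k \<longrightarrow> z ^ j \<noteq> 1))"

(* omega (for S = F) resp. nu (for S = K) *)
definition mu_level :: "nat \<Rightarrow> 'a::field set \<Rightarrow> enat" where
  "mu_level p S = (if \<forall>k. contains_mu p S k then \<infinity>
                   else enat (GREATEST k. contains_mu p S k))"

(* entries of the vector a: None = -infinity, Some k = k *)
definition ext_val :: "nat option \<Rightarrow> int" where
  "ext_val x = (case x of None \<Rightarrow> -1 | Some k \<Rightarrow> int k)"

definition lex_less :: "nat option list \<Rightarrow> nat option list \<Rightarrow> bool" where
  "lex_less xs ys \<longleftrightarrow> (\<exists>i < length xs. take i xs = take i ys \<and> ext_val (xs ! i) < ext_val (ys ! i))"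

definition norm_pair ::
  "('a::field \<Rightarrow> 'a) \<Rightarrow> nat \<Rightarrow> nat \<Rightarrow> 'a \<Rightarrow> nat \<Rightarrow> nat option list \<Rightarrow> int \<Rightarrow> bool" where
  "norm_pair \<sigma> p n \<xi> m a d \<longleftrightarrow>
     m \<ge> 1 \<and> length a = m \<and> ext_val (a ! 0) < int n
     \<and> (\<forall>i<m. case a ! i of None \<Rightarrow> True | Some k \<Rightarrow> k \<le> n)
     \<and> [d = 1] (mod int p)
     \<and> (\<exists>(\<alpha>::'a) (\<delta>::nat \<Rightarrow> 'a).
          \<alpha> \<noteq> 0 \<and> \<delta> m \<noteq> 0
          \<and> (\<forall>i<m. case a ! i of None \<Rightarrow> \<delta> i = 1
                               | Some k \<Rightarrow> \<delta> i \<noteq> 0 \<and> \<delta> i \<in> fixfield \<sigma> (p ^ k))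
          \<and> \<sigma> \<alpha> = \<alpha> powi d * (\<Prod>i\<le>m. \<delta> i ^ (p ^ i))
          \<and> \<xi> = normK \<sigma> (p ^ n) \<alpha> powi ((d - 1) div int p)
                 * normK \<sigma> (p ^ (n - 1)) (\<delta> 0)
                 * (\<Prod>i\<in>{1..m}. normK \<sigma> (p ^ n) (\<delta> i) ^ (p ^ (i - 1))))"

definition vp_min :: "nat \<Rightarrow> nat \<Rightarrow> int \<Rightarrow> nat" where
  "vp_min p m x = (if x = 0 then m else min (multiplicity (int p) x) m)"

definition np_le :: "nat \<Rightarrow> nat \<Rightarrow> nat option list \<Rightarrow> int \<Rightarrow> nat option list \<Rightarrow> int \<Rightarrow> bool" where
  "np_le p m a d a' d' \<longleftrightarrow> lex_less a a' \<or> (a = a' \<and> vp_min p m (d' - 1) \<le> vp_min p m (d - 1))"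

definition minimal_norm_pair ::
  "('a::field \<Rightarrow> 'a) \<Rightarrow> nat \<Rightarrow> nat \<Rightarrow> 'a \<Rightarrow> nat \<Rightarrow> nat option list \<Rightarrow> int \<Rightarrow> bool" where
  "minimal_norm_pair \<sigma> p n \<xi> m a d \<longleftrightarrow>
     norm_pair \<sigma> p n \<xi> m a d \<and> (\<forall>a' d'. norm_pair \<sigma> p n \<xi> m a' d' \<longrightarrow> np_le p m a d a' d')"

end

theory Submission
  imports Defs "HOL-Computational_Algebra.Polynomial"
begin


lemma lte_step:
  fixes p :: nat and x :: int
  assumes p: "prime p" and j: "j \<ge> 1" and j2: "p = 2 \<longrightarrow> j \<ge> 2"
    and d: "int p ^ j dvd x" and nd: "\<not> int p ^ (j+1) dvd x"
  shows "int p ^ (j+1) dvd ((1+x)^p - 1) \<and> \<not> int p ^ (j+2) dvd ((1+x)^p - 1)"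
proof -
  have p2: "p \<ge> 2" using p prime_ge_2_nat by blast
  obtain y where y: "x = int p ^ j * y" using d by blast
  have exp: "(1+x)^p = (\<Sum>k\<le>p. of_nat (p choose k) * x^k * 1^(p-k))"
    using binomial_ring[of x 1 p] by (simp add: add.commute)
  have split: "{..p} = {0,1} \<union> {2..p}" using p2 by auto
  have "(\<Sum>k\<le>p. of_nat (p choose k) * x^k * 1^(p-k)) =
      (\<Sum>k\<in>{0,1}. of_nat (p choose k) * x^k * 1^(p-k)) + (\<Sum>k\<in>{2..p}. of_nat (p choose k) * x^k * 1^(p-k))"
    unfolding split by (subst sum.union_disjoint) auto
  also have "(\<Sum>k\<in>{0,1}. of_nat (p choose k) * x^k * 1^(p-k)) = 1 + int p * x" by simp
  finally have e: "(1+x)^p - 1 = int p * x + (\<Sum>k\<in>{2..p}. of_nat (p choose k) * x^k)" using exp by simp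
  have R: "int p ^ (j+2) dvd (\<Sum>k\<in>{2..p}. of_nat (p choose k) * x^k)"
  proof (rule dvd_sum)
    fix k assume k: "k \<in> {2..p}"
    have xk: "x^k = int p ^ (j*k) * y^k" unfolding y by (simp add: power_mult_distrib power_mult)
    show "int p ^ (j+2) dvd of_nat (p choose k) * x^k"
    proof (cases "k = p")
      case True
      have "j + 2 \<le> j * p"
      proof (cases "p = 2")
        case True then show ?thesis using j2 by simp
      next
        case False then have "p \<ge> 3" using p2 by simp
        then have "j * 3 \<le> j * p" by simp
        then show ?thesis using j by linarith
      qed
      then have "int p ^ (j+2) dvd int p ^ (j*k)" using True by (intro le_imp_power_dvd) simp
      then show ?thesis unfolding xk by simp
    next
      case False
      then have "p dvd (p choose k)" using k p by (intro dvd_choose_prime) auto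
      then have a: "int p dvd of_nat (p choose k)" by (simp add: int_dvd_int_iff)
      have "j * 2 \<le> j * k" using k by simp
      then have "j + 1 \<le> j * k" using j by linarith
      then have b: "int p ^ (j+1) dvd int p ^ (j*k)" by (intro le_imp_power_dvd)
      have c: "int p * int p ^ (j+1) dvd of_nat (p choose k) * int p ^ (j*k)" by (rule mult_dvd_mono[OF a b])
      have "int p ^ (j+2) = int p * int p ^ (j+1)" by simp
      then have "int p ^ (j+2) dvd of_nat (p choose k) * int p ^ (j*k)" using c by simp
      then show ?thesis unfolding xk by (metis dvd_mult2 mult.assoc)
    qed
  qed
  have A: "int p ^ (j+1) dvd int p * x" using d by (simp add: mult_dvd_mono)
  have B: "\<not> int p ^ (j+2) dvd int p * x"
  proof
    assume "int p ^ (j+2) dvd int p * x"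
    then have "int p * int p ^ (j+1) dvd int p * x" by simp
    then have "int p ^ (j+1) dvd x" using p prime_gt_0_nat[OF p] by simp
    with nd show False by simp
  qed
  have R1: "int p ^ (j+1) dvd (\<Sum>k\<in>{2..p}. of_nat (p choose k) * x^k)"
    using R by (rule dvd_trans[rotated]) (simp add: le_imp_power_dvd)
  show ?thesis unfolding e
    using dvd_add[OF A R1] B dvd_add_left_iff[OF R] by simp
qed

lemma lte_iter:
  fixes p :: nat and x :: int
  assumes p: "prime p" and j: "j \<ge> 1" and j2: "p = 2 \<longrightarrow> j \<ge> 2"
    and d: "int p ^ j dvd x" and nd: "\<not> int p ^ (j+1) dvd x"
  shows "int p ^ (j+i) dvd ((1+x)^(p^i) - 1) \<and> \<not> int p ^ (j+i+1) dvd ((1+x)^(p^i) - 1)"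
proof (induction i)
  case 0 then show ?case using d nd by simp
next
  case (Suc i)
  define y where "y = (1+x)^(p^i) - 1"
  have "(1+x)^(p^Suc i) = (1+y)^p" unfolding y_def by (simp add: power_Suc2 power_mult[symmetric] mult.commute)
  moreover have "int p ^ (j+i+1) dvd ((1+y)^p - 1) \<and> \<not> int p ^ (j+i+2) dvd ((1+y)^p - 1)"
    using lte_step[OF p, of "j+i" y] Suc j j2 by (auto simp: y_def)
  ultimately show ?case by simp
qed

lemma lte:
  fixes p :: nat and x :: int
  assumes p: "prime p" and j: "j \<ge> 1" and j2: "p = 2 \<longrightarrow> j \<ge> 2"
    and d: "int p ^ j dvd x" and T: "int p ^ T dvd ((1+x)^(p^n) - 1)"
  shows "int p ^ (T - n) dvd x"
proof (rule ccontr)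
  assume nd: "\<not> int p ^ (T - n) dvd x"
  then have x0: "x \<noteq> 0" by auto
  have nu: "\<not> is_unit (int p)" using p by (metis not_prime_unit prime_nat_int_transfer)
  define v where "v = multiplicity (int p) x"
  have v1: "int p ^ v dvd x" unfolding v_def by (rule multiplicity_dvd)
  have v2: "\<not> int p ^ (v+1) dvd x"
    using multiplicity_geI[OF x0 nu, of "v+1"] v_def by auto
  have jv: "j \<le> v" using multiplicity_geI[OF x0 nu d] v_def by simp
  have vT: "v + 1 \<le> T - n"
  proof (rule ccontr)
    assume "\<not> v + 1 \<le> T - n"
    then have "T - n \<le> v" by simp
    then have "int p ^ (T-n) dvd int p ^ v" by (simp add: le_imp_power_dvd)
    with v1 nd show False using dvd_trans by blast
  qed
  have "\<not> int p ^ (v+n+1) dvd ((1+x)^(p^n) - 1)"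
    using lte_iter[OF p, of v x n] j jv j2 v1 v2 by auto
  moreover have "int p ^ (v+n+1) dvd int p ^ T" using vT by (intro le_imp_power_dvd) simp
  ultimately show False using T dvd_trans by blast
qed




definition prim :: "'a::field \<Rightarrow> nat \<Rightarrow> bool" where
  "prim w M \<longleftrightarrow> w ^ M = 1 \<and> (\<forall>j. 0 < j \<and> j < M \<longrightarrow> w ^ j \<noteq> 1)"

lemma prim_nz: "prim w M \<Longrightarrow> 0 < M \<Longrightarrow> w \<noteq> 0"
  unfolding prim_def by (metis power_0_left zero_neq_one not_gr0)

lemma prim_pow_mod: assumes "prim w M" "0 < M" shows "w ^ a = w ^ (a mod M)"
proof -
  have "w ^ a = w ^ (M * (a div M) + a mod M)" by simp
  also have "\<dots> = (w ^ M) ^ (a div M) * w ^ (a mod M)" by (simp only: power_add power_mult)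
  also have "\<dots> = w ^ (a mod M)" using assms unfolding prim_def by simp
  finally show ?thesis .
qed

lemma prim_eq_iff: assumes pr: "prim w M" and M: "0 < M" shows "w ^ a = w ^ b \<longleftrightarrow> [a = b] (mod M)"
proof
  assume "[a = b] (mod M)"
  then show "w ^ a = w ^ b" using prim_pow_mod[OF pr M] unfolding cong_def by metis
next
  assume e: "w ^ a = w ^ b"
  define r where "r = a mod M"
  define s where "s = b mod M"
  have rs: "w ^ r = w ^ s" using e prim_pow_mod[OF pr M] r_def s_def by metis
  have r: "r < M" "s < M" using M r_def s_def by auto
  have w0: "w \<noteq> 0" using prim_nz[OF pr M] .
  have "r = s"
  proof (rule ccontr)
    assume ne: "r \<noteq> s"
    have key: "\<And>u v. u < v \<Longrightarrow> v < M \<Longrightarrow> w ^ u = w ^ v \<Longrightarrow> False"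
    proof -
      fix u v assume uv: "u < v" "v < M" "w ^ u = w ^ v"
      have "w ^ v = w ^ u * w ^ (v - u)" using uv(1) by (metis le_add_diff_inverse less_imp_le power_add)
      then have "w ^ (v - u) = 1" using uv w0 by simp
      then show False using pr uv unfolding prim_def by auto
    qed
    show False using ne r rs key by (metis linorder_neqE_nat)
  qed
  then show "[a = b] (mod M)" unfolding cong_def r_def s_def .
qed

lemma prim_one_iff: assumes "prim w M" "0 < M" shows "w ^ a = 1 \<longleftrightarrow> M dvd a"
  using prim_eq_iff[OF assms, of a 0] by (simp add: cong_0_iff)

lemma prim_sub:
  assumes pr: "prim w (p ^ k)" and i: "i \<le> k" and p: "0 < p"
  shows "prim (w ^ (p ^ (k - i))) (p ^ i)"
  unfolding prim_def
proof safe
  have "p ^ (k - i) * p ^ i = p ^ k" using i by (simp add: power_add[symmetric])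
  then show "(w ^ p ^ (k - i)) ^ p ^ i = 1" using pr unfolding prim_def by (simp add: power_mult[symmetric])
next
  fix j assume j: "0 < j" "j < p ^ i" "(w ^ p ^ (k - i)) ^ j = 1"
  have "p ^ (k - i) * j < p ^ (k - i) * p ^ i" using j p by simp
  also have "\<dots> = p ^ k" using i by (simp add: power_add[symmetric])
  finally have "p ^ (k - i) * j < p ^ k" .
  moreover have "0 < p ^ (k - i) * j" using j p by simp
  moreover have "w ^ (p ^ (k - i) * j) = 1" using j(3) by (simp add: power_mult)
  ultimately show False using pr unfolding prim_def by blast
qed

lemma roots_powers:
  assumes pr: "prim w M" and M: "0 < M" and y: "y ^ M = 1"
  shows "\<exists>e<M. y = w ^ e"
proof -
  define P :: "'a poly" where "P = monom 1 M - 1"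
  have cP: "coeff P M = 1" using M by (simp add: P_def coeff_monom)
  then have P0: "P \<noteq> 0" by auto
  have dP: "degree P \<le> M" unfolding P_def
    by (rule order.trans[OF degree_diff_le_max]) (auto simp: degree_monom_le)
  define R where "R = {x. poly P x = 0}"
  have R: "R = {x. x ^ M = 1}" by (auto simp: R_def P_def poly_monom)
  have fR: "finite R" unfolding R_def using P0 by (rule poly_roots_finite)
  have cR: "card R \<le> M" unfolding R_def using card_poly_roots_bound[OF P0] dP by linarith
  define S where "S = (\<lambda>e. w ^ e) ` {..<M}"
  have inj: "inj_on (\<lambda>e. w ^ e) {..<M}"
  proof (rule inj_onI)
    fix a b assume "a \<in> {..<M}" "b \<in> {..<M}" "w ^ a = w ^ b"
    then show "a = b" using prim_eq_iff[OF pr M] by (auto simp: cong_def)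
  qed
  have cS: "card S = M" unfolding S_def using card_image[OF inj] by simp
  have SR: "S \<subseteq> R"
  proof
    fix s assume "s \<in> S"
    then obtain e where e: "s = w ^ e" unfolding S_def by blast
    have "(w ^ e) ^ M = (w ^ M) ^ e" by (metis power_mult mult.commute)
    then show "s \<in> R" using pr e unfolding R prim_def by simp
  qed
  have "S = R" using card_seteq[OF fR SR] cR cS by simp
  moreover have "y \<in> R" using R y by simp
  ultimately show ?thesis unfolding S_def by auto
qed

definition ahom :: "('a::field \<Rightarrow> 'a) \<Rightarrow> bool" where
  "ahom f \<longleftrightarrow> (\<forall>x y. f (x + y) = f x + f y) \<and> (\<forall>x y. f (x * y) = f x * f y) \<and> f 1 = 1"

lemma ahom_add: "ahom f \<Longrightarrow> f (x + y) = f x + f y" by (simp add: ahom_def)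
lemma ahom_mult: "ahom f \<Longrightarrow> f (x * y) = f x * f y" by (simp add: ahom_def)
lemma ahom_one: "ahom f \<Longrightarrow> f 1 = 1" by (simp add: ahom_def)
lemma ahom_zero: "ahom f \<Longrightarrow> f 0 = 0"
  using ahom_add[of f 0 0] add_cancel_right_right[of "f 0" "f 0"] by simp
lemma ahom_power: "ahom f \<Longrightarrow> f (x ^ k) = f x ^ k"
  by (induction k) (simp_all add: ahom_one ahom_mult)
lemma ahom_inverse: assumes "ahom f" shows "f (inverse x) = inverse (f x)"
proof (cases "x = 0")
  case True then show ?thesis using ahom_zero[OF assms] by simp
next
  case False
  then have "f x * f (inverse x) = 1" using ahom_mult[OF assms, of x "inverse x"] ahom_one[OF assms] by simp
  then show ?thesis by (metis inverse_unique)
qed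
lemma ahom_sum: "ahom f \<Longrightarrow> f (sum g A) = (\<Sum>a\<in>A. f (g a))"
  by (induction A rule: infinite_finite_induct) (simp_all add: ahom_zero ahom_add)
lemma ahom_prod: "ahom f \<Longrightarrow> f (prod g A) = (\<Prod>a\<in>A. f (g a))"
  by (induction A rule: infinite_finite_induct) (simp_all add: ahom_one ahom_mult)
lemma ahom_of_nat: "ahom f \<Longrightarrow> f (of_nat n) = of_nat n"
  by (induction n) (simp_all add: ahom_zero ahom_one ahom_add)
lemma ahom_funpow: "ahom f \<Longrightarrow> ahom (f ^^ j)"
  by (induction j) (simp_all add: ahom_def)

lemma fix_funpow: "f x = x \<Longrightarrow> (f ^^ j) x = x"
  by (induction j) simp_all




lemma eigen:
  fixes \<sigma> :: "'a::field \<Rightarrow> 'a" and \<gamma> :: 'a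
  assumes h: "ahom \<sigma>" and N: "N = p * q" "0 < q" "0 < p" and pr: "prim \<gamma> N" and sg: "\<sigma> \<gamma> = \<gamma>"
    and idN: "\<sigma> ^^ N = id" and nid: "\<sigma> ^^ q \<noteq> id" and Nnz: "(of_nat N :: 'a) \<noteq> 0"
    and cop: "\<forall>k. k < N \<longrightarrow> \<not> p dvd k \<longrightarrow> coprime k N"
  shows "\<exists>\<alpha>. \<alpha> \<noteq> 0 \<and> \<sigma> \<alpha> = \<gamma> * \<alpha>"
proof (rule ccontr)
  assume "\<not> ?thesis"
  then have H: "\<And>\<alpha>. \<sigma> \<alpha> = \<gamma> * \<alpha> \<Longrightarrow> \<alpha> = 0" by blast
  have N0: "0 < N" using N by simp
  have g0: "\<gamma> \<noteq> 0" using prim_nz[OF pr N0] .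
  have gN: "\<gamma> ^ N = 1" using pr unfolding prim_def by simp
  define g where "g = inverse \<gamma>"
  have sgg: "\<sigma> g = g" unfolding g_def using ahom_inverse[OF h] sg by simp
  have ggN: "g ^ N = 1" unfolding g_def using gN by (simp add: power_inverse)
  have gg: "\<gamma> * g = 1" unfolding g_def using g0 by simp
  define P where "P k \<theta> = (\<Sum>j<N. g ^ (k * j) * (\<sigma> ^^ j) \<theta>)" for k \<theta>
  have Ps: "\<sigma> (P k \<theta>) = \<gamma> ^ k * P k \<theta>" for k \<theta>
  proof -
    define f where "f j = g ^ (k * j) * (\<sigma> ^^ j) \<theta>" for j
    have sf: "\<sigma> (f j) = \<gamma> ^ k * f (Suc j)" for j
    proof -
      have "\<sigma> (f j) = g ^ (k * j) * (\<sigma> ^^ Suc j) \<theta>"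
        unfolding f_def by (simp add: ahom_mult[OF h] ahom_power[OF h] sgg)
      moreover have "\<gamma> ^ k * g ^ (k * Suc j) = g ^ (k * j)"
      proof -
        have "\<gamma> ^ k * g ^ (k * Suc j) = (\<gamma> * g) ^ k * g ^ (k * j)"
          by (simp add: power_add power_mult_distrib mult_ac)
        then show ?thesis using gg by simp
      qed
      ultimately show ?thesis unfolding f_def by (simp add: mult.assoc[symmetric])
    qed
    have "g ^ (k * N) = (g ^ N) ^ k" by (metis mult.commute power_mult)
    then have fN: "f N = f 0" unfolding f_def using ggN idN by simp
    have shift: "(\<Sum>j<N. f (Suc j)) = (\<Sum>j<N. f j)"
      using sum.lessThan_Suc_shift[of f N] sum.lessThan_Suc[of f N] fN by (simp add: add.commute)
    have "\<sigma> (P k \<theta>) = (\<Sum>j<N. \<sigma> (f j))" unfolding P_def f_def by (simp add: ahom_sum[OF h])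
    also have "\<dots> = \<gamma> ^ k * (\<Sum>j<N. f (Suc j))" by (simp add: sf sum_distrib_left)
    also have "\<dots> = \<gamma> ^ k * P k \<theta>" using shift unfolding P_def f_def by simp
    finally show ?thesis .
  qed
  have Pi: "(\<sigma> ^^ i) (P k \<theta>) = \<gamma> ^ (k * i) * P k \<theta>" for i k \<theta>
  proof (induction i)
    case 0 then show ?case by simp
  next
    case (Suc i)
    have "(\<sigma> ^^ Suc i) (P k \<theta>) = \<sigma> (\<gamma> ^ (k * i) * P k \<theta>)" using Suc by simp
    also have "\<dots> = \<gamma> ^ (k * i) * (\<gamma> ^ k * P k \<theta>)" by (simp add: ahom_mult[OF h] ahom_power[OF h] sg Ps)
    also have "\<dots> = \<gamma> ^ (k * Suc i) * P k \<theta>" by (simp add: power_add mult_ac)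
    finally show ?case .
  qed
  have sumP: "(\<Sum>k<N. P k \<theta>) = of_nat N * \<theta>" for \<theta>
  proof -
    have "(\<Sum>k<N. P k \<theta>) = (\<Sum>k<N. \<Sum>j<N. g ^ (k * j) * (\<sigma> ^^ j) \<theta>)"
      by (simp add: P_def)
    also have "\<dots> = (\<Sum>j<N. \<Sum>k<N. g ^ (k * j) * (\<sigma> ^^ j) \<theta>)" by (rule sum.swap)
    also have "\<dots> = (\<Sum>j<N. (\<Sum>k<N. (g ^ j) ^ k) * (\<sigma> ^^ j) \<theta>)"
    proof (rule sum.cong[OF refl])
      fix j
      have "(\<Sum>k<N. g ^ (k * j) * (\<sigma> ^^ j) \<theta>) = (\<Sum>k<N. (g ^ j) ^ k * (\<sigma> ^^ j) \<theta>)"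
        by (rule sum.cong[OF refl]) (metis mult.commute power_mult)
      then show "(\<Sum>k<N. g ^ (k * j) * (\<sigma> ^^ j) \<theta>) = (\<Sum>k<N. (g ^ j) ^ k) * (\<sigma> ^^ j) \<theta>"
        by (simp only: sum_distrib_right)
    qed
    also have "\<dots> = (\<Sum>j<N. if j = 0 then of_nat N * \<theta> else 0)"
    proof (rule sum.cong)
      fix j assume j: "j \<in> {..<N}"
      show "(\<Sum>k<N. (g ^ j) ^ k) * (\<sigma> ^^ j) \<theta> = (if j = 0 then of_nat N * \<theta> else 0)"
      proof (cases "j = 0")
        case True then show ?thesis by simp
      next
        case False
        have "\<gamma> ^ j \<noteq> 1" using pr j False unfolding prim_def by auto
        then have ne: "g ^ j \<noteq> 1" unfolding g_def by (simp add: power_inverse)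
        have "(g ^ j) ^ N = (g ^ N) ^ j" by (metis mult.commute power_mult)
        then have "(g ^ j) ^ N = 1" using ggN by simp
        then have "(\<Sum>k<N. (g ^ j) ^ k) = 0" using geometric_sum[OF ne, of N] by simp
        then show ?thesis using False by simp
      qed
    qed simp
    also have "\<dots> = of_nat N * \<theta>" using N0 by simp
    finally show ?thesis .
  qed
  have Pz: "P k \<theta> = 0" if k: "k < N" "\<not> p dvd k" for k \<theta>
  proof (rule ccontr)
    assume x0: "P k \<theta> \<noteq> 0"
    have "coprime k N" using cop k by blast
    then obtain u where u: "[k * u = Suc 0] (mod N)" using cong_solve_coprime_nat by blast
    have gu: "\<gamma> ^ (k * u) = \<gamma> ^ 1" using prim_eq_iff[OF pr N0, of "k*u" 1] u by simp
    have "\<sigma> (P k \<theta> ^ u) = (\<gamma> ^ k * P k \<theta>) ^ u" by (simp add: ahom_power[OF h] Ps)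
    also have "\<dots> = \<gamma> ^ (k * u) * P k \<theta> ^ u" by (simp add: power_mult_distrib power_mult)
    finally have "\<sigma> (P k \<theta> ^ u) = \<gamma> * P k \<theta> ^ u" using gu by simp
    then have "P k \<theta> ^ u = 0" by (rule H)
    with x0 show False by simp
  qed
  have fixq: "(\<sigma> ^^ q) \<theta> = \<theta>" for \<theta>
  proof -
    have hq: "ahom (\<sigma> ^^ q)" by (rule ahom_funpow[OF h])
    have "of_nat N * (\<sigma> ^^ q) \<theta> = (\<sigma> ^^ q) (of_nat N * \<theta>)"
      by (simp add: ahom_mult[OF hq] ahom_of_nat[OF hq])
    also have "\<dots> = (\<Sum>k<N. (\<sigma> ^^ q) (P k \<theta>))" by (simp add: sumP[symmetric] ahom_sum[OF hq])
    also have "\<dots> = (\<Sum>k<N. P k \<theta>)"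
    proof (rule sum.cong)
      fix k assume k: "k \<in> {..<N}"
      show "(\<sigma> ^^ q) (P k \<theta>) = P k \<theta>"
      proof (cases "p dvd k")
        case True
        then obtain r where r: "k = p * r" by blast
        have "k * q = N * r" using r N by simp
        then have "\<gamma> ^ (k * q) = (\<gamma> ^ N) ^ r" by (simp add: power_mult)
        then show ?thesis using Pi gN by simp
      next
        case False then show ?thesis using Pz k ahom_zero[OF ahom_funpow[OF h]] by simp
      qed
    qed simp
    also have "\<dots> = of_nat N * \<theta>" by (rule sumP)
    finally show ?thesis using Nnz by simp
  qed
  then have "\<sigma> ^^ q = id" by auto
  with nid show False by simp
qed




lemma fixed_exp:
  fixes \<sigma> :: "'a::field \<Rightarrow> 'a"
  assumes h: "ahom \<sigma>" and z: "prim z (p ^ T)" and p: "0 < p" and sz: "\<sigma> z = z ^ c"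
    and s: "s \<le> T" and fx: "\<sigma> (z ^ (p ^ (T - s) * e)) = z ^ (p ^ (T - s) * e)"
  shows "int p ^ s dvd int e * (int c - 1)"
proof -
  define a where "a = p ^ (T - s) * e"
  have "\<sigma> (z ^ a) = z ^ (c * a)" by (simp add: ahom_power[OF h] sz power_mult)
  then have "z ^ (c * a) = z ^ a" using fx a_def by simp
  then have "[c * a = a] (mod p ^ T)" using prim_eq_iff[OF z] p by simp
  then have "[int (c * a) = int a] (mod int (p ^ T))" by (simp only: cong_int_iff)
  then have "int (p ^ T) dvd int (c * a) - int a" by (simp add: cong_iff_dvd_diff)
  moreover have "int (c * a) - int a = int p ^ (T - s) * (int e * (int c - 1))"
    by (simp add: a_def algebra_simps)
  moreover have "int (p ^ T) = int p ^ (T - s) * int p ^ s"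
    using s by (simp add: power_add[symmetric])
  ultimately show ?thesis using p by simp
qed

lemma fixed_root:
  fixes \<sigma> :: "'a::field \<Rightarrow> 'a"
  assumes p: "prime p" and n: "n \<ge> 1" and m: "m \<ge> 1" and h: "ahom \<sigma>" and idN: "\<sigma> ^^ (p ^ n) = id"
    and xi: "\<xi> ^ p = 1" "\<xi> \<noteq> 1" "\<sigma> \<xi> = \<xi>"
    and allK: "\<forall>k. contains_mu p (UNIV :: 'a set) k"
    and two: "p = 2 \<longrightarrow> (\<exists>i. \<sigma> i = i \<and> prim i 4)"
  shows "\<exists>\<delta>. \<sigma> \<delta> = \<delta> \<and> \<delta> ^ (p ^ (n + m - 1)) = \<xi> \<and> prim (\<delta> ^ (p ^ m)) (p ^ n)"
proof -
  define L where "L = n + m"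
  define T where "T = L + n"
  have p0: "0 < p" using p prime_gt_0_nat by blast
  have p2: "2 \<le> p" using p prime_ge_2_nat by blast
  have MT: "0 < p ^ T" using p0 by simp
  obtain z :: 'a where z: "prim z (p ^ T)" using allK unfolding contains_mu_def prim_def by blast
  have "\<sigma> z ^ (p ^ T) = 1" using z unfolding prim_def by (simp add: ahom_power[OF h, symmetric] ahom_one[OF h])
  then obtain c where sz: "\<sigma> z = z ^ c" using roots_powers[OF z MT] by blast
  have it: "(\<sigma> ^^ j) z = z ^ (c ^ j)" for j
  proof (induction j)
    case 0 then show ?case by simp
  next
    case (Suc j)
    have "(\<sigma> ^^ Suc j) z = \<sigma> (z ^ (c ^ j))" using Suc by simp
    also have "\<dots> = z ^ (c * c ^ j)" by (simp add: ahom_power[OF h] sz power_mult)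
    finally show ?case by simp
  qed
  have "z ^ (c ^ (p ^ n)) = z ^ 1" using it[of "p ^ n"] idN by simp
  then have cN: "[c ^ (p ^ n) = 1] (mod p ^ T)" using prim_eq_iff[OF z MT, of "c ^ (p ^ n)" 1] by simp
  have T1: "1 \<le> T" using n unfolding T_def L_def by simp
  have zp: "prim (z ^ (p ^ (T - 1))) (p ^ 1)" using prim_sub[OF z T1 p0] .
  obtain e where e: "\<xi> = (z ^ (p ^ (T - 1))) ^ e"
    using roots_powers[OF zp] xi(1) p0 by auto
  have xe: "\<xi> = z ^ (p ^ (T - 1) * e)" using e by (simp add: power_mult)
  have ne: "\<not> p dvd e"
    using prim_one_iff[OF zp, of e] xi(2) e p0 by simp
  have d1: "int p ^ 1 dvd int e * (int c - 1)"
    using fixed_exp[OF h z p0 sz T1, of e] xe xi(3) by simp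
  have pint: "prime (int p)" using p by simp
  have c1: "int p dvd int c - 1"
    using d1 ne pint by (simp add: prime_dvd_mult_iff int_dvd_int_iff)
  define j where "j = (if p = 2 then 2 else (1::nat))"
  have cj: "int p ^ j dvd int c - 1"
  proof (cases "p = 2")
    case False then show ?thesis using c1 by (simp add: j_def)
  next
    case True
    then obtain i where i: "\<sigma> i = i" "prim i 4" using two by blast
    have T2: "2 \<le> T" using n unfolding T_def L_def by simp
    have z4: "prim (z ^ (2 ^ (T - 2))) (2 ^ 2)" using prim_sub[OF z[unfolded True] T2] by simp
    have "i ^ (2 ^ 2) = 1" using i(2) unfolding prim_def by simp
    then obtain e2 where e2: "i = (z ^ (2 ^ (T - 2))) ^ e2"
      using roots_powers[OF z4] by auto
    have ie: "i = z ^ (2 ^ (T - 2) * e2)" using e2 by (simp add: power_mult)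
    have i2: "i ^ 2 \<noteq> 1" using i(2) unfolding prim_def by auto
    have "i ^ 2 = (z ^ (2 ^ (T - 2))) ^ (e2 * 2)" using e2 by (simp only: power_mult)
    then have "\<not> 2 ^ 2 dvd e2 * 2" using prim_one_iff[OF z4, of "e2 * 2"] i2 by simp
    then have "odd e2" by auto
    have d2: "int 2 ^ 2 dvd int e2 * (int c - 1)"
      using fixed_exp[OF h z[unfolded True] _ sz T2, of e2] ie i(1) by simp
    have "coprime (2::int) (int e2)" using \<open>odd e2\<close> by simp
    then have "coprime ((2::int) ^ 2) (int e2)" by (simp only: coprime_power_left_iff) simp
    then have "(2::int) ^ 2 dvd int c - 1" using d2 coprime_dvd_mult_right_iff by (metis of_nat_numeral)
    then show ?thesis using True by (simp add: j_def)
  qed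
  have "[int (c ^ (p ^ n)) = int 1] (mod int (p ^ T))" using cN by (simp only: cong_int_iff)
  then have "int (p ^ T) dvd int (c ^ (p ^ n)) - int 1" by (simp only: cong_iff_dvd_diff)
  then have "int p ^ T dvd (1 + (int c - 1)) ^ (p ^ n) - 1" by simp
  moreover have j1: "j \<ge> 1" and j2: "p = 2 \<longrightarrow> j \<ge> 2" by (simp_all add: j_def)
  ultimately have cL: "int p ^ (T - n) dvd int c - 1"
    using lte[OF p j1 j2 cj] by blast
  have TnL: "T - n = L" unfolding T_def by simp
  define \<delta>0 where "\<delta>0 = z ^ (p ^ n)"
  have s0: "\<sigma> \<delta>0 = \<delta>0"
  proof -
    have "int (c * p ^ n) - int (p ^ n) = int p ^ n * (int c - 1)" by (simp add: algebra_simps)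
    moreover have "int (p ^ T) = int p ^ n * int p ^ L" unfolding T_def by (simp add: power_add)
    ultimately have "int (p ^ T) dvd int (c * p ^ n) - int (p ^ n)" using cL TnL by simp
    then have "[int (c * p ^ n) = int (p ^ n)] (mod int (p ^ T))" by (simp add: cong_iff_dvd_diff)
    then have "[c * p ^ n = p ^ n] (mod p ^ T)" by (simp only: cong_int_iff)
    then have "z ^ (c * p ^ n) = z ^ (p ^ n)" using prim_eq_iff[OF z MT] by simp
    then show ?thesis unfolding \<delta>0_def by (simp add: ahom_power[OF h] sz power_mult)
  qed
  define \<delta> where "\<delta> = \<delta>0 ^ e"
  have sd: "\<sigma> \<delta> = \<delta>" unfolding \<delta>_def by (simp add: ahom_power[OF h] s0)
  have "n + (n + m - 1) = T - 1" unfolding T_def L_def using m by simp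
  then have "p ^ n * p ^ (n + m - 1) = p ^ (T - 1)" by (metis power_add)
  then have ex: "p ^ n * e * p ^ (n + m - 1) = p ^ (T - 1) * e" by (metis mult.commute mult.assoc)
  have dx: "\<delta> ^ (p ^ (n + m - 1)) = \<xi>" unfolding \<delta>_def \<delta>0_def xe
    by (simp only: power_mult[symmetric] ex)
  have pT: "p ^ T = p ^ n * p ^ L" unfolding T_def by (simp add: power_add)
  have ex2: "p ^ n * e * p ^ m = p ^ L * e" unfolding L_def by (simp add: power_add)
  have gam: "\<delta> ^ (p ^ m) = z ^ (p ^ L * e)" unfolding \<delta>_def \<delta>0_def
    by (simp only: power_mult[symmetric] ex2)
  have "prim (\<delta> ^ (p ^ m)) (p ^ n)"
    unfolding prim_def gam
  proof safe
    have ex3: "p ^ L * e * p ^ n = p ^ T * e" using pT by simp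
    have "(z ^ (p ^ L * e)) ^ p ^ n = (z ^ (p ^ T)) ^ e" by (simp only: power_mult[symmetric] ex3)
    then show "(z ^ (p ^ L * e)) ^ p ^ n = 1" using z unfolding prim_def by simp
  next
    fix i assume i: "0 < i" "i < p ^ n" "(z ^ (p ^ L * e)) ^ i = 1"
    then have "z ^ (p ^ L * e * i) = 1" by (simp only: power_mult)
    then have "p ^ T dvd p ^ L * e * i" using prim_one_iff[OF z MT] by simp
    then have "p ^ n * p ^ L dvd p ^ L * (e * i)" using pT by (simp add: mult_ac)
    then have "p ^ n dvd e * i" using p0 by (simp add: mult.commute[of "p ^ n"])
    moreover have "coprime p e" using prime_imp_coprime[OF p ne] .
    then have "coprime (p ^ n) e" by simp
    ultimately have "p ^ n dvd i" using coprime_dvd_mult_right_iff by blast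
    then show False using i by (auto dest: dvd_imp_le)
  qed
  then show ?thesis using sd dx by blast
qed




theorem proposition3p1:
  fixes \<sigma> :: "'a::field \<Rightarrow> 'a" and p n :: nat and \<xi> :: 'a
  assumes "prime p" and "n \<ge> 1"
    and "is_field_automorphism \<sigma>"
    and "(\<sigma> ^^ (p ^ n)) = id" and "\<forall>j. 0 < j \<and> j < p ^ n \<longrightarrow> (\<sigma> ^^ j) \<noteq> id"
    and "of_nat p \<noteq> (0::'a)"
    and "\<xi> ^ p = 1" and "\<forall>j. 0 < j \<and> j < p \<longrightarrow> \<xi> ^ j \<noteq> 1" and "\<xi> \<in> fixfield \<sigma> 1"
    and "p = 2 \<and> n = 1 \<longrightarrow> (\<exists>x. x \<noteq> 0 \<and> normK \<sigma> (p ^ n) x = -1)"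
    and "\<not> (p = 2 \<and> mu_level p (fixfield \<sigma> 1) = 1 \<and> 1 < mu_level p (UNIV :: 'a set))"
    and "mu_level p (UNIV :: 'a set) = \<infinity>"
  shows "\<forall>m\<ge>1. minimal_norm_pair \<sigma> p n \<xi> m (replicate m None) 1"
proof (intro allI impI)
  fix m :: nat assume m: "m \<ge> 1"
  have h: "ahom \<sigma>" using assms(3) unfolding is_field_automorphism_def ahom_def by blast
  have p0: "0 < p" using assms(1) prime_gt_0_nat by blast
  have p2: "2 \<le> p" using assms(1) prime_ge_2_nat by blast
  have F: "fixfield \<sigma> 1 = {x. \<sigma> x = x}" by (simp add: fixfield_def)
  have sxi: "\<sigma> \<xi> = \<xi>" using assms(9) F by simp
  have xi1: "\<xi> \<noteq> 1" using assms(8) p2 by (metis One_nat_def Suc_le_lessD numeral_2_eq_2 power_one_right zero_less_one)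
  have allK: "\<forall>k. contains_mu p (UNIV :: 'a set) k"
    using assms(12) unfolding mu_level_def by (auto split: if_splits)
  have two: "p = 2 \<longrightarrow> (\<exists>i. \<sigma> i = i \<and> prim i 4)"
  proof
    assume p2e: "p = 2"
    show "\<exists>i. \<sigma> i = i \<and> prim i 4"
    proof (rule ccontr)
      assume no: "\<not> (\<exists>i. \<sigma> i = i \<and> prim i 4)"
      have nc: "\<not> contains_mu p (fixfield \<sigma> 1) k" if k2: "k \<ge> 2" for k
      proof
        assume "contains_mu p (fixfield \<sigma> 1) k"
        then obtain w where w: "\<sigma> w = w" "prim w (p ^ k)" unfolding contains_mu_def prim_def F by blast
        have "prim (w ^ (p ^ (k - 2))) (p ^ 2)" using prim_sub[OF w(2) k2 p0] .
        moreover have "\<sigma> (w ^ (p ^ (k - 2))) = w ^ (p ^ (k - 2))" using w(1) by (simp add: ahom_power[OF h])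
        ultimately show False using no p2e by simp
      qed
      have c1: "contains_mu p (fixfield \<sigma> 1) 1" unfolding contains_mu_def using assms(7,8,9) by auto
      have "mu_level p (fixfield \<sigma> 1) = 1"
      proof -
        have "\<not> (\<forall>k. contains_mu p (fixfield \<sigma> 1) k)" using nc[of 2] by auto
        moreover have "(GREATEST k. contains_mu p (fixfield \<sigma> 1) k) = 1"
        proof (rule Greatest_equality)
          show "contains_mu p (fixfield \<sigma> 1) 1" by (rule c1)
        next
          fix y assume "contains_mu p (fixfield \<sigma> 1) y"
          then show "y \<le> 1" using nc[of y] by linarith
        qed
        ultimately show ?thesis unfolding mu_level_def by (simp add: one_enat_def)
      qed
      then show False using assms(11) assms(12) p2e by simp
    qed
  qed
  obtain \<delta> where d: "\<sigma> \<delta> = \<delta>" "\<delta> ^ (p ^ (n + m - 1)) = \<xi>" "prim (\<delta> ^ (p ^ m)) (p ^ n)"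
    using fixed_root[OF assms(1) assms(2) m h assms(4) assms(7) xi1 sxi allK two] by blast
  define \<gamma> where "\<gamma> = \<delta> ^ (p ^ m)"
  obtain \<alpha> where a: "\<alpha> \<noteq> 0" "\<sigma> \<alpha> = \<gamma> * \<alpha>"
  proof -
    have N: "p ^ n = p * p ^ (n - 1)" using assms(2) by (cases n) auto
    have q0: "0 < p ^ (n - 1)" using p0 by simp
    have "p ^ (n - 1) < p ^ n" using assms(2) p2 by (intro power_strict_increasing) auto
    then have nid: "\<sigma> ^^ (p ^ (n - 1)) \<noteq> id" using assms(5) q0 by blast
    have Nnz: "(of_nat (p ^ n) :: 'a) \<noteq> 0" using assms(6) by simp
    have cop: "\<forall>k. k < p ^ n \<longrightarrow> \<not> p dvd k \<longrightarrow> coprime k (p ^ n)"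
    proof (intro allI impI)
      fix k assume "k < p ^ n" "\<not> p dvd k"
      then have "coprime p k" using prime_imp_coprime[OF assms(1)] by blast
      then show "coprime k (p ^ n)" by (simp add: coprime_commute)
    qed
    have sg: "\<sigma> \<gamma> = \<gamma>" unfolding \<gamma>_def by (simp add: ahom_power[OF h] d(1))
    have pr: "prim \<gamma> (p ^ n)" using d(3) unfolding \<gamma>_def .
    show thesis using eigen[OF h N q0 p0 pr sg assms(4) nid Nnz cop] that by blast
  qed
  have dnz: "\<delta> \<noteq> 0"
  proof
    assume "\<delta> = 0"
    then have "\<xi> = 0" using d(2) p0 by (simp add: power_0_left)
    then show False using assms(7) p0 by (simp add: power_0_left)
  qed
  define dl where "dl = (\<lambda>i::nat. if i = m then \<delta> else 1)"
  have nK1: "normK \<sigma> M 1 = 1" for M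
    unfolding normK_def by (simp add: ahom_one[OF ahom_funpow[OF h]])
  have nKd: "normK \<sigma> (p ^ n) \<delta> = \<delta> ^ (p ^ n)"
    unfolding normK_def using fix_funpow[of \<sigma> \<delta>, OF d(1)] by simp
  show "minimal_norm_pair \<sigma> p n \<xi> m (replicate m None) 1"
    unfolding minimal_norm_pair_def
  proof
    show "norm_pair \<sigma> p n \<xi> m (replicate m None) 1"
      unfolding norm_pair_def
    proof (intro conjI)
      show "1 \<le> m" by (rule m)
      show "length (replicate m None) = m" by simp
      show "ext_val (replicate m None ! 0) < int n" using m by (simp add: ext_val_def)
      show "\<forall>i<m. case replicate m None ! i of None \<Rightarrow> True | Some k \<Rightarrow> k \<le> n" by simp
      show "[1 = 1] (mod int p)" by simp
      have pr: "(\<Prod>i\<le>m. dl i ^ p ^ i) = \<delta> ^ (p ^ m)"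
      proof -
        have "(\<Prod>i\<le>m. dl i ^ p ^ i) = (\<Prod>i\<le>m. if i = m then \<delta> ^ (p ^ m) else 1)"
          by (rule prod.cong) (auto simp: dl_def)
        also have "\<dots> = \<delta> ^ (p ^ m)" by simp
        finally show ?thesis .
      qed
      have pr2: "(\<Prod>i\<in>{1..m}. normK \<sigma> (p ^ n) (dl i) ^ p ^ (i - 1)) = \<xi>"
      proof -
        have "(\<Prod>i\<in>{1..m}. normK \<sigma> (p ^ n) (dl i) ^ p ^ (i - 1))
            = (\<Prod>i\<in>{1..m}. if i = m then (\<delta> ^ (p ^ n)) ^ p ^ (m - 1) else 1)"
          by (rule prod.cong) (auto simp: dl_def nK1 nKd)
        also have "\<dots> = (\<delta> ^ (p ^ n)) ^ p ^ (m - 1)" using m by simp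
        also have "\<dots> = \<delta> ^ (p ^ n * p ^ (m - 1))" by (simp only: power_mult)
        also have "p ^ n * p ^ (m - 1) = p ^ (n + m - 1)" using m by (simp add: power_add[symmetric])
        finally show ?thesis using d(2) by simp
      qed
      show "\<exists>\<alpha> \<delta>. \<alpha> \<noteq> 0 \<and> \<delta> m \<noteq> 0 \<and>
          (\<forall>i<m. case replicate m None ! i of None \<Rightarrow> \<delta> i = 1
                 | Some k \<Rightarrow> \<delta> i \<noteq> 0 \<and> \<delta> i \<in> fixfield \<sigma> (p ^ k)) \<and>
          \<sigma> \<alpha> = \<alpha> powi 1 * (\<Prod>i\<le>m. \<delta> i ^ p ^ i) \<and>
          \<xi> = normK \<sigma> (p ^ n) \<alpha> powi ((1 - 1) div int p) * normK \<sigma> (p ^ (n - 1)) (\<delta> 0) *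
              (\<Prod>i\<in>{1..m}. normK \<sigma> (p ^ n) (\<delta> i) ^ p ^ (i - 1))"
      proof (intro exI conjI)
        show "\<alpha> \<noteq> 0" by (rule a(1))
        show "dl m \<noteq> 0" using dnz by (simp add: dl_def)
        show "\<forall>i<m. case replicate m None ! i of None \<Rightarrow> dl i = 1
                 | Some k \<Rightarrow> dl i \<noteq> 0 \<and> dl i \<in> fixfield \<sigma> (p ^ k)" by (simp add: dl_def)
        show "\<sigma> \<alpha> = \<alpha> powi 1 * (\<Prod>i\<le>m. dl i ^ p ^ i)" using a(2) pr by (simp add: \<gamma>_def mult.commute)
        have "dl 0 = 1" using m by (simp add: dl_def)
        then show "\<xi> = normK \<sigma> (p ^ n) \<alpha> powi ((1 - 1) div int p) * normK \<sigma> (p ^ (n - 1)) (dl 0) *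
              (\<Prod>i\<in>{1..m}. normK \<sigma> (p ^ n) (dl i) ^ p ^ (i - 1))" using pr2 nK1 by simp
      qed
    qed
  next
    show "\<forall>a' d'. norm_pair \<sigma> p n \<xi> m a' d' \<longrightarrow> np_le p m (replicate m None) 1 a' d'"
    proof (intro allI impI)
      fix a' d' assume np: "norm_pair \<sigma> p n \<xi> m a' d'"
      have la: "length a' = m" using np unfolding norm_pair_def by blast
      show "np_le p m (replicate m None) 1 a' d'"
      proof (cases "a' = replicate m None")
        case True
        then show ?thesis unfolding np_le_def vp_min_def by auto
      next
        case False
        have ex: "\<exists>i. i < m \<and> a' ! i \<noteq> None"
        proof (rule ccontr)
          assume "\<not> ?thesis"
          then have "a' = replicate m None" using la by (intro nth_equalityI) auto
          with False show False by simp
        qed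
        define i where "i = (LEAST i. i < m \<and> a' ! i \<noteq> None)"
        have i: "i < m \<and> a' ! i \<noteq> None" unfolding i_def by (rule LeastI_ex[OF ex])
        have before: "a' ! k = None" if "k < i" for k
          using not_less_Least[OF that[unfolded i_def]] i that by auto
        have tk: "take i (replicate m None) = take i a'"
          using i la before by (intro nth_equalityI) auto
        obtain kk where kk: "a' ! i = Some kk" using i by auto
        have "lex_less (replicate m None) a'"
          unfolding lex_less_def using i tk kk by (intro exI[of _ i]) (simp add: ext_val_def)
        then show ?thesis unfolding np_le_def by simp
      qed
    qed
  qed
qed


end
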